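(* Let $A$ be an infinite discrete abelian group of uniform torsion, i.e. $dA=0$ for some integer $d\ge1$. Then $\mathcal{S}(\mathbf{R}\times A)$ is not path-connected.
   Context: $\mathcal{S}(G)$ denotes the space of closed subgroups of the locally compact group $G$ with the Chabauty topology (basic open sets $\{F: F\cap K=\emptyset,\ F\cap U_i\ne\emptyset\ \forall i\}$, $K$ compact, $U_i$ open). *)

theory Defs
  imports "HOL-Analysis.Analysis" "HOL-Library.Product_Plus"
begin

primrec nsmul :: "nat \<Rightarrow> 'a::monoid_add \<Rightarrow> 'a" where
  "nsmul 0 x = 0"
| "nsmul (Suc n) x = x + nsmul n x"

text \<open>Closed subgroups of an abelian group type whose topology is X (topspace X = UNIV).\<close>
definition closed_subgroups :: "'g::ab_group_add topology \<Rightarrow> 'g set set" where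
  "closed_subgroups X = {H. closedin X H \<and> 0 \<in> H \<and> (\<forall>x\<in>H. \<forall>y\<in>H. x - y \<in> H)}"

text \<open>Chabauty topology on a family C of subsets of the space X: generated by the
  subbasic sets {F. F \<inter> K = {}} (K compact) and {F. F \<inter> U \<noteq> {}} (U open),
  restricted to C. Finite intersections of these are exactly the paper's basic open sets.\<close>
definition chabauty :: "'a topology \<Rightarrow> 'a set set \<Rightarrow> 'a set topology" where
  "chabauty X C = subtopology
     (topology_generated_by
        ({{F. F \<inter> K = {}} | K. compactin X K} \<union> {{F. F \<inter> U \<noteq> {}} | U. openin X U}))
     C"

end

theory Submission
  imports Defs
begin

lemma nsmul_prod: "nsmul n ((r::real), (a::'a::monoid_add)) = (real n * r, nsmul n a)"
  by (induction n) (auto simp: algebra_simps zero_prod_def)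

lemma nsmul_zero: "nsmul n (0::'a::monoid_add) = 0"
  by (induction n) auto

lemma csg:
  assumes "H \<in> closed_subgroups X"
  shows "0 \<in> H" "\<And>x y. x \<in> H \<Longrightarrow> y \<in> H \<Longrightarrow> x - y \<in> H"
  using assms by (auto simp: closed_subgroups_def)

lemma csg_neg: "H \<in> closed_subgroups X \<Longrightarrow> x \<in> H \<Longrightarrow> - x \<in> H"
  by (metis csg diff_0)

lemma csg_add: "H \<in> closed_subgroups X \<Longrightarrow> x \<in> H \<Longrightarrow> y \<in> H \<Longrightarrow> x + y \<in> H"
  by (metis csg(2) csg_neg diff_minus_eq_add)

lemma csg_nsmul: "H \<in> closed_subgroups X \<Longrightarrow> x \<in> H \<Longrightarrow> nsmul n x \<in> H"
  by (induction n) (auto simp: csg csg_add)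

lemma csg_int:
  fixes H :: "(real \<times> 'a::ab_group_add) set"
  assumes "H \<in> closed_subgroups X" "(e, 0) \<in> H"
  shows "(of_int k * e, 0) \<in> H"
proof (cases "k \<ge> 0")
  case True
  have "nsmul (nat k) (e, 0::'a) \<in> H" using csg_nsmul assms by blast
  then show ?thesis using True by (simp add: nsmul_prod nsmul_zero)
next
  case False
  have "nsmul (nat (-k)) (e, 0::'a) \<in> H" using csg_nsmul assms by blast
  then have "- nsmul (nat (-k)) (e, 0::'a) \<in> H" using csg_neg assms by blast
  then show ?thesis using False by (simp add: nsmul_prod nsmul_zero)
qed


lemma L1:
  fixes H :: "(real \<times> 'a::ab_group_add) set"
  assumes H: "H \<in> closed_subgroups X" and e: "(e, 0) \<in> H" "0 < e" "e < 3/2" and ra: "(r, a) \<in> H"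
  shows "\<exists>r'. -1 < r' \<and> r' < 1 \<and> (r', a) \<in> H"
proof -
  define k where "k = \<lfloor>r / e + 1/2\<rfloor>"
  have k1: "of_int k \<le> r / e + 1/2" and k2: "r / e + 1/2 < of_int k + 1"
    unfolding k_def by linarith+
  have "of_int k * e \<le> r + e/2" using k1 e(2) by (simp add: field_simps)
  moreover have "r - e/2 < of_int k * e" using k2 e(2) by (simp add: field_simps)
  ultimately have b: "-1 < r - of_int k * e" "r - of_int k * e < 1" using e by linarith+
  have "(r, a) - (of_int k * e, 0) \<in> H" using csg(2)[OF H ra csg_int[OF H e(1)]] .
  then show ?thesis using b by (intro exI[of _ "r - of_int k * e"]) simp
qed

lemma L2:
  fixes H :: "(real \<times> 'a::ab_group_add) set"
  assumes H: "H \<in> closed_subgroups X" and d: "d \<ge> 1" and tor: "\<forall>x::'a. nsmul d x = 0"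
    and miss: "H \<inter> ({s..(real d + 1) * s} \<times> {0}) = {}" and s: "s > 0"
    and ra: "(r, a) \<in> H" and r: "r \<noteq> 0"
  shows "\<bar>r\<bar> \<ge> s"
proof (rule ccontr)
  assume "\<not> \<bar>r\<bar> \<ge> s"
  hence rs: "\<bar>r\<bar> < s" by simp
  define q where "q = real d * \<bar>r\<bar>"
  have qpos: "q > 0" using d r unfolding q_def by simp
  have qds: "q < real d * s" unfolding q_def using d rs by simp
  have dr: "(real d * r, 0) \<in> H"
    using csg_nsmul[OF H ra, of d] tor by (simp add: nsmul_prod)
  have q: "(q, 0) \<in> H"
  proof (cases "r > 0")
    case True then show ?thesis using dr unfolding q_def by simp
  next
    case False
    have "- (real d * r, 0::'a) \<in> H" using csg_neg[OF H dr] .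
    then show ?thesis using False unfolding q_def by simp
  qed
  define k where "k = \<lceil>s / q\<rceil>"
  have k1: "s / q \<le> of_int k" and k2: "of_int k < s / q + 1" unfolding k_def by linarith+
  have a1: "s \<le> of_int k * q" using k1 qpos by (simp add: field_simps)
  have a2: "of_int k * q < s + q" using k2 qpos by (simp add: field_simps)
  have "(of_int k * q, 0) \<in> H" using csg_int[OF H q] .
  moreover have "of_int k * q \<in> {s..(real d + 1) * s}" using a1 a2 qds by (simp add: algebra_simps)
  ultimately show False using miss by blast
qed

lemma L3:
  fixes H :: "(real \<times> 'a::ab_group_add) set"
  assumes H: "H \<in> closed_subgroups X" and d: "d \<ge> 1" and tor: "\<forall>x::'a. nsmul d x = 0"
    and sep: "\<And>r a. (r, a) \<in> H \<Longrightarrow> r \<noteq> 0 \<Longrightarrow> \<bar>r\<bar> \<ge> s" and s: "s > 0"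
    and fin: "finite {a. (0, a) \<in> H}"
  shows "finite (snd ` H)"
proof (cases "\<forall>x\<in>H. fst x = 0")
  case True
  have "snd ` H \<subseteq> {a. (0, a) \<in> H}"
  proof
    fix a assume "a \<in> snd ` H"
    then obtain x where "x \<in> H" "a = snd x" by blast
    then show "a \<in> {a. (0, a) \<in> H}" using True by (cases x) auto
  qed
  then show ?thesis using fin finite_subset by blast
next
  case False
  then obtain r0 a0 where ra0: "(r0, a0) \<in> H" "r0 \<noteq> 0" by auto
  define p where "p = real d * \<bar>r0\<bar>"
  have ppos: "p > 0" using d ra0 unfolding p_def by simp
  have dr: "(real d * r0, 0) \<in> H"
    using csg_nsmul[OF H ra0(1), of d] tor by (simp add: nsmul_prod)
  have pH: "(p, 0) \<in> H"
  proof (cases "r0 > 0")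
    case True then show ?thesis using dr unfolding p_def by simp
  next
    case False
    have "- (real d * r0, 0::'a) \<in> H" using csg_neg[OF H dr] .
    then show ?thesis using False unfolding p_def by simp
  qed
  define R where "R = {r. 0 \<le> r \<and> r < p \<and> (\<exists>a. (r, a) \<in> H)}"
  have injR: "inj_on (\<lambda>r. \<lfloor>r / s\<rfloor>) R"
  proof (rule inj_onI)
    fix x y assume x: "x \<in> R" and y: "y \<in> R" and eq: "\<lfloor>x / s\<rfloor> = \<lfloor>y / s\<rfloor>"
    from x obtain ax where ax: "(x, ax) \<in> H" unfolding R_def by blast
    from y obtain ay where ay: "(y, ay) \<in> H" unfolding R_def by blast
    have "\<bar>x / s - y / s\<bar> < 1" using eq by linarith
    hence lt: "\<bar>x - y\<bar> < s" using s by (simp add: field_simps abs_divide[symmetric] diff_divide_distrib[symmetric])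
    have "(x, ax) - (y, ay) \<in> H" using csg(2)[OF H ax ay] .
    hence "(x - y, ax - ay) \<in> H" by simp
    then show "x = y" using sep lt by fastforce
  qed
  have imR: "(\<lambda>r. \<lfloor>r / s\<rfloor>) ` R \<subseteq> {0..\<lfloor>p / s\<rfloor>}"
  proof
    fix z assume "z \<in> (\<lambda>r. \<lfloor>r / s\<rfloor>) ` R"
    then obtain r where r: "r \<in> R" "z = \<lfloor>r / s\<rfloor>" by blast
    have "0 \<le> r / s" "r / s \<le> p / s" using r s unfolding R_def by (auto simp: divide_right_mono)
    then show "z \<in> {0..\<lfloor>p / s\<rfloor>}" using r(2) by (auto intro: floor_mono)
  qed
  have finR: "finite R"
    using finite_imageD[OF finite_subset[OF imR] injR] by simp
  define ch where "ch r = (SOME a. (r, a) \<in> H)" for r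
  have sub: "snd ` H \<subseteq> (\<Union>r\<in>R. (\<lambda>b. ch r + b) ` {a. (0, a) \<in> H})"
  proof
    fix a assume "a \<in> snd ` H"
    then obtain r where ra: "(r, a) \<in> H" by force
    define k where "k = \<lfloor>r / p\<rfloor>"
    have k1: "of_int k \<le> r / p" and k2: "r / p < of_int k + 1" unfolding k_def by linarith+
    have b1: "0 \<le> r - of_int k * p" using k1 ppos by (simp add: field_simps)
    have b2: "r - of_int k * p < p" using k2 ppos by (simp add: field_simps)
    have "(r, a) - (of_int k * p, 0) \<in> H" using csg(2)[OF H ra csg_int[OF H pH]] .
    hence r'H: "(r - of_int k * p, a) \<in> H" by simp
    define r' where "r' = r - of_int k * p"
    have r'R: "r' \<in> R" using b1 b2 r'H unfolding R_def r'_def by blast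
    have chH: "(r', ch r') \<in> H" unfolding ch_def using r'H r'_def by (metis someI_ex)
    have "(r', a) - (r', ch r') \<in> H" using csg(2)[OF H _ chH] r'H r'_def by blast
    hence "(0, a - ch r') \<in> H" by simp
    hence "a \<in> (\<lambda>b. ch r' + b) ` {a. (0, a) \<in> H}"
      by (intro image_eqI[of _ _ "a - ch r'"]) auto
    then show "a \<in> (\<Union>r\<in>R. (\<lambda>b. ch r + b) ` {a. (0, a) \<in> H})" using r'R by blast
  qed
  show ?thesis using finite_subset[OF sub] finR fin by blast
qed


abbreviation XTop :: "(real \<times> 'a) topology" where
  "XTop \<equiv> prod_topology euclideanreal (discrete_topology UNIV)"

lemma ch_miss: "compactin X K \<Longrightarrow> openin (chabauty X C) {F \<in> C. F \<inter> K = {}}"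
  unfolding chabauty_def openin_subtopology
  by (rule exI[of _ "{F. F \<inter> K = {}}"]) (auto intro!: topology_generated_by_Basis)

lemma ch_hit: "openin X U \<Longrightarrow> openin (chabauty X C) {F \<in> C. F \<inter> U \<noteq> {}}"
  unfolding chabauty_def openin_subtopology
  by (rule exI[of _ "{F. F \<inter> U \<noteq> {}}"]) (auto intro!: topology_generated_by_Basis)

lemma ch_topspace: "topspace (chabauty X C) = C"
proof -
  have "UNIV \<in> ({{F. F \<inter> K = {}} | K. compactin X K} \<union> {{F. F \<inter> U \<noteq> {}} | U. openin X U})"
    by (rule UnI1, rule CollectI, rule exI[of _ "{}"]) auto
  then show ?thesis unfolding chabauty_def by auto
qed

lemma openXT: "openin XTop ({x<..<y} \<times> {a})"
  by (simp add: openin_prod_Times_iff)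

lemma compXT: "compactin XTop ({x..y} \<times> {a})"
  by (simp add: compactin_Times finite_imp_compactin)

lemma compXT1: "compactin XTop {(x, a)}"
  using compXT[of x x a] by simp


lemma locconst:
  assumes g: "continuous_map (top_of_set {0..1::real}) Y g"
  and t0: "t0 \<in> {0..1}" and V: "openin Y V" "g t0 \<in> V"
  and PQ: "\<And>a. \<exists>P1 P2. openin Y P1 \<and> openin Y P2 \<and> (\<forall>H\<in>V. (H \<in> P1 \<longleftrightarrow> Q H a) \<and> (H \<in> P2 \<longleftrightarrow> \<not> Q H a))"
  shows "\<exists>e>0. \<forall>t\<in>{0..1}. dist t t0 < e \<longrightarrow> g t \<in> V \<and> (\<forall>a. Q (g t) a = Q (g t0) a)"
proof -
  let ?S = "{0..1::real}"
  have "openin (top_of_set ?S) {t \<in> ?S. g t \<in> V}"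
    using openin_continuous_map_preimage[OF g V(1)] by simp
  then obtain e where e: "e > 0" "\<forall>t\<in>?S. dist t t0 < e \<longrightarrow> t \<in> {t \<in> ?S. g t \<in> V}"
    using t0 V(2) unfolding openin_euclidean_subtopology_iff by blast
  define J where "J = ?S \<inter> ball t0 e"
  have cJ: "connected J" unfolding J_def
    by (intro convex_connected convex_Int convex_ball) (simp add: is_interval_convex)
  have t0J: "t0 \<in> J" using t0 e unfolding J_def by simp
  have JV: "\<And>t. t \<in> J \<Longrightarrow> g t \<in> V" using e unfolding J_def by (auto simp: dist_commute)
  have "\<forall>t\<in>J. \<forall>a. Q (g t) a = Q (g t0) a"
  proof (intro ballI allI)
    fix t a assume tJ: "t \<in> J"
    obtain P1 P2 where P: "openin Y P1" "openin Y P2" "\<forall>H\<in>V. (H \<in> P1 \<longleftrightarrow> Q H a) \<and> (H \<in> P2 \<longleftrightarrow> \<not> Q H a)"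
      using PQ by blast
    have o1: "openin (top_of_set ?S) {t \<in> ?S. g t \<in> P1}"
      using openin_continuous_map_preimage[OF g P(1)] by simp
    have o2: "openin (top_of_set ?S) {t \<in> ?S. g t \<in> P2}"
      using openin_continuous_map_preimage[OF g P(2)] by simp
    obtain T1 where T1: "open T1" "{t \<in> ?S. g t \<in> P1} = ?S \<inter> T1" using o1 unfolding openin_open by blast
    obtain T2 where T2: "open T2" "{t \<in> ?S. g t \<in> P2} = ?S \<inter> T2" using o2 unfolding openin_open by blast
    have E1: "openin (top_of_set J) (J \<inter> T1)" using T1(1) unfolding openin_open by blast
    have E2: "openin (top_of_set J) (J \<inter> T2)" using T2(1) unfolding openin_open by blast
    have m1: "\<And>t. t \<in> J \<Longrightarrow> t \<in> T1 \<longleftrightarrow> Q (g t) a"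
    proof -
      fix t assume "t \<in> J"
      then have "t \<in> ?S" "g t \<in> V" using JV unfolding J_def by auto
      then show "t \<in> T1 \<longleftrightarrow> Q (g t) a" using T1(2) P(3) by blast
    qed
    have m2: "\<And>t. t \<in> J \<Longrightarrow> t \<in> T2 \<longleftrightarrow> \<not> Q (g t) a"
    proof -
      fix t assume "t \<in> J"
      then have "t \<in> ?S" "g t \<in> V" using JV unfolding J_def by auto
      then show "t \<in> T2 \<longleftrightarrow> \<not> Q (g t) a" using T2(2) P(3) by blast
    qed
    have "J \<subseteq> (J \<inter> T1) \<union> (J \<inter> T2)" "(J \<inter> T1) \<inter> (J \<inter> T2) = {}" using m1 m2 by blast+
    then have "J \<inter> T1 = {} \<or> J \<inter> T2 = {}" using cJ E1 E2 unfolding connected_openin by blast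
    then show "Q (g t) a = Q (g t0) a" using m1 m2 tJ t0J by blast
  qed
  then show ?thesis using e unfolding J_def by (intro exI[of _ e]) (auto simp: dist_commute)
qed


lemma key_local:
  fixes g :: "real \<Rightarrow> (real \<times> 'a::ab_group_add) set"
  assumes d: "d \<ge> 1" and tor: "\<forall>x::'a. nsmul d x = 0"
    and g: "continuous_map (top_of_set {0..1::real}) (chabauty XTop (closed_subgroups XTop)) g"
    and t0: "t0 \<in> {0..1}"
  shows "\<exists>e>0. \<forall>t\<in>{0..1}. dist t t0 < e \<longrightarrow> (finite (snd ` g t) \<longleftrightarrow> finite (snd ` g t0))"
proof -
  let ?C = "closed_subgroups (XTop :: (real \<times> 'a) topology)"
  let ?Y = "chabauty XTop ?C"
  have gC: "\<And>t. t \<in> {0..1} \<Longrightarrow> g t \<in> ?C"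
    using continuous_map_image_subset_topspace[OF g] ch_topspace by fastforce
  define U1 where "U1 = {F \<in> ?C. F \<inter> ({0<..<3/2} \<times> {0}) \<noteq> {}}"
  define s :: real where "s = 1 / (real d + 2)"
  have s: "s > 0" unfolding s_def by simp
  define Ns where "Ns = {F \<in> ?C. F \<inter> ({s..(real d + 1) * s} \<times> {0}) = {}}"
  show ?thesis
  proof (cases "g t0 \<in> U1")
    case True
    have oU: "openin ?Y U1" unfolding U1_def by (rule ch_hit[OF openXT])
    have PQ: "\<exists>P1 P2. openin ?Y P1 \<and> openin ?Y P2 \<and>
      (\<forall>H\<in>U1. (H \<in> P1 \<longleftrightarrow> a \<in> snd ` H) \<and> (H \<in> P2 \<longleftrightarrow> \<not> a \<in> snd ` H))" for a
    proof (intro exI conjI)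
      show "openin ?Y {F \<in> ?C. F \<inter> ({-1<..<1} \<times> {a}) \<noteq> {}}" by (rule ch_hit[OF openXT])
      show "openin ?Y {F \<in> ?C. F \<inter> ({-1..1} \<times> {a}) = {}}" by (rule ch_miss[OF compXT])
      have *: "a \<in> snd ` H \<Longrightarrow> \<exists>r'. -1 < r' \<and> r' < 1 \<and> (r', a) \<in> H" if "H \<in> U1" for H
      proof -
        assume "a \<in> snd ` H"
        then obtain r where ra: "(r, a) \<in> H" by force
        from that obtain e where "(e, 0) \<in> H" "0 < e" "e < 3/2" "H \<in> ?C" unfolding U1_def by auto
        then show ?thesis using L1 ra by blast
      qed
      show "\<forall>H\<in>U1. (H \<in> {F \<in> ?C. F \<inter> ({-1<..<1} \<times> {a}) \<noteq> {}} \<longleftrightarrow> a \<in> snd ` H) \<and>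
            (H \<in> {F \<in> ?C. F \<inter> ({-1..1} \<times> {a}) = {}} \<longleftrightarrow> \<not> a \<in> snd ` H)"
      proof
        fix H assume HU: "H \<in> U1"
        then have HC: "H \<in> ?C" unfolding U1_def by auto
        show "(H \<in> {F \<in> ?C. F \<inter> ({-1<..<1} \<times> {a}) \<noteq> {}} \<longleftrightarrow> a \<in> snd ` H) \<and>
            (H \<in> {F \<in> ?C. F \<inter> ({-1..1} \<times> {a}) = {}} \<longleftrightarrow> \<not> a \<in> snd ` H)"
        proof -
          have i1: "H \<inter> ({-1<..<1} \<times> {a}) \<noteq> {} \<longleftrightarrow> a \<in> snd ` H"
          proof
            assume "H \<inter> ({-1<..<1} \<times> {a}) \<noteq> {}"
            then obtain r where "(r, a) \<in> H" by auto
            then show "a \<in> snd ` H" by (metis snd_conv image_eqI)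
          next
            assume "a \<in> snd ` H"
            then obtain r' where "-1 < r'" "r' < 1" "(r', a) \<in> H" using *[OF HU] by blast
            then show "H \<inter> ({-1<..<1} \<times> {a}) \<noteq> {}" by auto
          qed
          have i2: "H \<inter> ({-1..1} \<times> {a}) = {} \<longleftrightarrow> a \<notin> snd ` H"
          proof
            assume "H \<inter> ({-1..1} \<times> {a}) = {}"
            then show "a \<notin> snd ` H" using i1 by auto
          next
            assume "a \<notin> snd ` H"
            then show "H \<inter> ({-1..1} \<times> {a}) = {}" by (auto simp: image_iff)
          qed
          show ?thesis using HC i1 i2 by simp
        qed
      qed
    qed
    have "\<exists>e>0. \<forall>t\<in>{0..1}. dist t t0 < e \<longrightarrow> g t \<in> U1 \<and> (\<forall>a. (a \<in> snd ` g t) = (a \<in> snd ` g t0))"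
      by (rule locconst[OF g t0 oU True]) (rule PQ)
    then obtain e where e: "e > 0" "\<forall>t\<in>{0..1}. dist t t0 < e \<longrightarrow> g t \<in> U1 \<and> (\<forall>a. (a \<in> snd ` g t) = (a \<in> snd ` g t0))"
      by blast
    show ?thesis
    proof (intro exI[of _ e] conjI ballI impI)
      fix t assume "t \<in> {0..1}" "dist t t0 < e"
      then have "snd ` g t = snd ` g t0" using e(2) by blast
      then show "finite (snd ` g t) = finite (snd ` g t0)" by simp
    qed (use e in auto)
  next
    case False
    have NsU: "H \<in> Ns" if "H \<in> ?C" "H \<notin> U1" for H
    proof -
      have "H \<inter> ({s..(real d + 1) * s} \<times> {0}) = {}"
      proof (rule ccontr)
        assume "H \<inter> ({s..(real d + 1) * s} \<times> {0}) \<noteq> {}"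
        then obtain x where x: "(x, 0) \<in> H" "s \<le> x" "x \<le> (real d + 1) * s" by auto
        have "(real d + 1) * s < 3/2" unfolding s_def by (simp add: field_simps)
        then have "(x, 0) \<in> H \<inter> ({0<..<3/2} \<times> {0})" using x s by auto
        then have "H \<in> U1" unfolding U1_def using that(1) by blast
        then show False using that(2) by blast
      qed
      then show ?thesis unfolding Ns_def using that by blast
    qed
    have t0N: "g t0 \<in> Ns" using NsU gC[OF t0] False by blast
    have oN: "openin ?Y Ns" unfolding Ns_def by (rule ch_miss[OF compXT])
    have sepN: "\<And>H r a. H \<in> Ns \<Longrightarrow> (r, a) \<in> H \<Longrightarrow> r \<noteq> 0 \<Longrightarrow> \<bar>r\<bar> \<ge> s"
    proof -
      fix H r a assume HN: "H \<in> Ns" and ra: "(r, a) \<in> H" and r: "r \<noteq> 0"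
      from HN have HC: "H \<in> ?C" and miss: "H \<inter> ({s..(real d + 1) * s} \<times> {0}) = {}"
        unfolding Ns_def by auto
      show "\<bar>r\<bar> \<ge> s" by (rule L2[OF HC d tor miss s ra r])
    qed
    have PQ: "\<exists>P1 P2. openin ?Y P1 \<and> openin ?Y P2 \<and>
      (\<forall>H\<in>Ns. (H \<in> P1 \<longleftrightarrow> (0, a) \<in> H) \<and> (H \<in> P2 \<longleftrightarrow> \<not> (0, a) \<in> H))" for a
    proof (intro exI conjI)
      show "openin ?Y {F \<in> ?C. F \<inter> ({-s<..<s} \<times> {a}) \<noteq> {}}" by (rule ch_hit[OF openXT])
      show "openin ?Y {F \<in> ?C. F \<inter> {(0, a)} = {}}" by (rule ch_miss[OF compXT1])
      show "\<forall>H\<in>Ns. (H \<in> {F \<in> ?C. F \<inter> ({-s<..<s} \<times> {a}) \<noteq> {}} \<longleftrightarrow> (0, a) \<in> H) \<and>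
            (H \<in> {F \<in> ?C. F \<inter> {(0, a)} = {}} \<longleftrightarrow> \<not> (0, a) \<in> H)"
      proof
        fix H assume HN: "H \<in> Ns"
        then have HC: "H \<in> ?C" unfolding Ns_def by simp
        have iff: "H \<inter> ({-s<..<s} \<times> {a}) \<noteq> {} \<longleftrightarrow> (0, a) \<in> H"
        proof
          assume "H \<inter> ({-s<..<s} \<times> {a}) \<noteq> {}"
          then obtain r where r: "(r, a) \<in> H" "-s < r" "r < s" by auto
          then have "r = 0" using sepN[OF HN r(1)] by (cases "r = 0") auto
          then show "(0, a) \<in> H" using r by simp
        next
          assume "(0, a) \<in> H" then show "H \<inter> ({-s<..<s} \<times> {a}) \<noteq> {}" using s by auto
        qed
        then show "(H \<in> {F \<in> ?C. F \<inter> ({-s<..<s} \<times> {a}) \<noteq> {}} \<longleftrightarrow> (0, a) \<in> H) \<and>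
            (H \<in> {F \<in> ?C. F \<inter> {(0, a)} = {}} \<longleftrightarrow> \<not> (0, a) \<in> H)"
          using HC iff by simp
      qed
    qed
    have "\<exists>e>0. \<forall>t\<in>{0..1}. dist t t0 < e \<longrightarrow> g t \<in> Ns \<and> (\<forall>a. ((0, a) \<in> g t) = ((0, a) \<in> g t0))"
      by (rule locconst[OF g t0 oN t0N]) (rule PQ)
    then obtain e where e: "e > 0" "\<forall>t\<in>{0..1}. dist t t0 < e \<longrightarrow> g t \<in> Ns \<and> (\<forall>a. ((0, a) \<in> g t) = ((0, a) \<in> g t0))"
      by blast
    have equiv: "finite (snd ` H) \<longleftrightarrow> finite {a. (0, a) \<in> H}" if "H \<in> Ns" for H
    proof
      assume "finite (snd ` H)"
      moreover have "{a. (0, a) \<in> H} \<subseteq> snd ` H" by force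
      ultimately show "finite {a. (0, a) \<in> H}" using finite_subset by blast
    next
      assume "finite {a. (0, a) \<in> H}"
      note fin = this
      have HC: "H \<in> ?C" using that unfolding Ns_def by simp
      have sepH: "\<And>r a. (r, a) \<in> H \<Longrightarrow> r \<noteq> 0 \<Longrightarrow> \<bar>r\<bar> \<ge> s" using sepN[OF that] by blast
      show "finite (snd ` H)" by (rule L3[OF HC d tor sepH s fin])
    qed
    show ?thesis
    proof (intro exI[of _ e] conjI ballI impI)
      fix t assume "t \<in> {0..1}" "dist t t0 < e"
      then have "g t \<in> Ns" "{a. (0, a) \<in> g t} = {a. (0, a) \<in> g t0}" using e(2) by blast+
      then show "finite (snd ` g t) = finite (snd ` g t0)" using equiv t0N by simp
    qed (use e in auto)
  qed
qed


theorem proposition7p6: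
  fixes d :: nat
  assumes "d \<ge> 1"
    and "\<forall>x::'a::ab_group_add. nsmul d x = 0"
    and "infinite (UNIV :: 'a set)"
  shows "\<not> path_connected_space
           (chabauty (prod_topology euclideanreal (discrete_topology (UNIV :: 'a set)))
                     (closed_subgroups (prod_topology euclideanreal (discrete_topology (UNIV :: 'a set)))))"
proof
  let ?C = "closed_subgroups (XTop :: (real \<times> 'a) topology)"
  let ?Y = "chabauty XTop ?C"
  assume pc: "path_connected_space ?Y"
  have x: "{(0::real, 0::'a)} \<in> ?C"
  proof -
    have "closedin (XTop :: (real \<times> 'a) topology) ({0::real} \<times> {0::'a})"
      by (rule iffD2[OF closedin_prod_Times_iff]) simp
    then show ?thesis unfolding closed_subgroups_def by (auto simp: zero_prod_def)
  qed
  have y: "({0::real} \<times> (UNIV :: 'a set)) \<in> ?C"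
  proof -
    have "closedin (XTop :: (real \<times> 'a) topology) ({0::real} \<times> (UNIV::'a set))"
      by (simp add: closedin_prod_Times_iff)
    then show ?thesis unfolding closed_subgroups_def by (auto simp: zero_prod_def)
  qed
  obtain g where g: "pathin ?Y g" "g 0 = {(0, 0)}" "g 1 = {0::real} \<times> (UNIV :: 'a set)"
    using pc x y ch_topspace unfolding path_connected_space_def by metis
  have gc: "continuous_map (top_of_set {0..1::real}) ?Y g" using g(1) by (simp add: pathin_def)
  define S :: "real set" where "S = {0..1}"
  define T where "T = {t \<in> S. finite (snd ` g t)}"
  have loc: "\<And>t0. t0 \<in> S \<Longrightarrow> \<exists>e>0. \<forall>t\<in>S. dist t t0 < e \<longrightarrow> (finite (snd ` g t) \<longleftrightarrow> finite (snd ` g t0))"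
    unfolding S_def by (rule key_local[OF assms(1,2) gc])
  have o1: "openin (top_of_set S) T"
    unfolding openin_euclidean_subtopology_iff
  proof (intro conjI ballI)
    show "T \<subseteq> S" unfolding T_def by auto
    fix x assume "x \<in> T"
    then obtain e where "e > 0" "\<forall>t\<in>S. dist t x < e \<longrightarrow> (finite (snd ` g t) \<longleftrightarrow> finite (snd ` g x))"
      using loc unfolding T_def by blast
    then show "\<exists>e>0. \<forall>x'\<in>S. dist x' x < e \<longrightarrow> x' \<in> T" using \<open>x \<in> T\<close> unfolding T_def by blast
  qed
  have o2: "openin (top_of_set S) (S - T)"
    unfolding openin_euclidean_subtopology_iff
  proof (intro conjI ballI)
    show "S - T \<subseteq> S" by auto
    fix x assume "x \<in> S - T"
    then obtain e where "e > 0" "\<forall>t\<in>S. dist t x < e \<longrightarrow> (finite (snd ` g t) \<longleftrightarrow> finite (snd ` g x))"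
      using loc by blast
    then show "\<exists>e>0. \<forall>x'\<in>S. dist x' x < e \<longrightarrow> x' \<in> S - T" using \<open>x \<in> S - T\<close> unfolding T_def by blast
  qed
  have "0 \<in> T" unfolding T_def S_def using g(2) by simp
  moreover have "1 \<in> S - T" unfolding T_def S_def using g(3) assms(3) by simp
  moreover have "connected S" unfolding S_def by simp
  ultimately show False using o1 o2 unfolding connected_openin by blast
qed

end
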